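(* Let $\underline{d}=(d_0,\dots,d_n)\in\mathbb{N}^{n+1}$, fix $k\in[0,n]$ with $d_k=\min(d_0,\dots,d_n)$, and let $\underline{e}$ be a rising vector. Then the orbit $\mathcal{O}(\underline{e})$ is contained in $\Sigma_{\underline{d}}$.
   Context: $\mathrm{Rep}_{\underline{d}}=\bigoplus_{i=1}^n\mathrm{Hom}(\mathbb{C}^{d_{i-1}},\mathbb{C}^{d_i})$ with the action of $\mathrm{GL}_{\underline{d}}=\prod_{i=0}^n\mathrm{GL}(d_i,\mathbb{C})$; $\Sigma_{\underline{d}}=\{(A_i)\in\mathrm{Rep}_{\underline{d}}: A_n\cdots A_1=0\}$. A rising vector is a tuple $\underline{e}=(e_0,\dots,e_{k-1},\star,e_{k+1},\dots,e_n)$ of nonnegative integers with $\sum_{i\ne k}e_i=d_k$. Its dot set: for $x\in[0,k-1]$ the points $(x,y)$ with $d_k-d_x-\sum_{i=x}^{k-1}e_i\le y<d_k-\sum_{i=x}^{k-1}e_i$; for $x=k$ the points $(k,y)$, $0\le y<d_k$; for $x\in[k+1,n]$ the points $(x,y)$ with $\sum_{i=k+1}^xe_i\le y<d_x+\sum_{i=k+1}^xe_i$. The quiver module $V(\underline{e})$ has at vertex $x$ the space with basis the dots of column $x$, the map $x-1\to x$ sending dot $(x-1,y)$ to $(x,y)$ if it exists and to $0$ otherwise. Choosing bases gives a tuple of matrices $(A_1,\dots,A_n)\in\mathrm{Rep}_{\underline{d}}$; $\mathcal{O}(\underline{e})$ is its $\mathrm{GL}_{\underline{d}}$-orbit. 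*)

theory Defs
  imports "Jordan_Normal_Form.Matrix"
begin

text \<open>Dimension vectors are d :: nat => nat, read on {0..n}.
  An element of Rep_d is a family A :: nat => complex mat, where only A 1, ..., A n matter,
  and A i is a (d i) x (d (i-1)) matrix (a map C^{d_{i-1}} -> C^{d_i}).\<close>

definition Rep :: "nat \<Rightarrow> (nat \<Rightarrow> nat) \<Rightarrow> (nat \<Rightarrow> complex mat) set" where
  "Rep n d = {A. \<forall>i\<in>{1..n}. A i \<in> carrier_mat (d i) (d (i - 1))}"

fun comp_path :: "(nat \<Rightarrow> nat) \<Rightarrow> (nat \<Rightarrow> complex mat) \<Rightarrow> nat \<Rightarrow> complex mat" where
  "comp_path d A 0 = 1\<^sub>m (d 0)"
| "comp_path d A (Suc i) = A (Suc i) * comp_path d A i"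

definition Sigma_d :: "nat \<Rightarrow> (nat \<Rightarrow> nat) \<Rightarrow> (nat \<Rightarrow> complex mat) set" where
  "Sigma_d n d = {A \<in> Rep n d. comp_path d A n = 0\<^sub>m (d n) (d 0)}"

definition GL_elem :: "nat \<Rightarrow> (nat \<Rightarrow> nat) \<Rightarrow> (nat \<Rightarrow> complex mat) \<Rightarrow> bool" where
  "GL_elem n d g = (\<forall>i\<in>{0..n}. g i \<in> carrier_mat (d i) (d i) \<and> invertible_mat (g i))"

definition orbit :: "nat \<Rightarrow> (nat \<Rightarrow> nat) \<Rightarrow> (nat \<Rightarrow> complex mat) \<Rightarrow> (nat \<Rightarrow> complex mat) set" where
  "orbit n d A = {B. \<exists>g h. GL_elem n d g \<and>
      (\<forall>i\<in>{0..n}. h i \<in> carrier_mat (d i) (d i) \<and> inverts_mat (g i) (h i) \<and> inverts_mat (h i) (g i)) \<and>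
      (\<forall>i\<in>{1..n}. B i = g i * A i * h (i - 1))}"

text \<open>Rising vector: e :: nat => nat, entries e_i for i in [0,n], i ~= k (the value e k is the
  placeholder star and is ignored), with sum_{i ~= k} e_i = d_k.\<close>
definition rising_vector :: "nat \<Rightarrow> (nat \<Rightarrow> nat) \<Rightarrow> nat \<Rightarrow> (nat \<Rightarrow> nat) \<Rightarrow> bool" where
  "rising_vector n d k e = ((\<Sum>i\<in>{0..n} - {k}. e i) = d k)"

text \<open>Lowest y-coordinate of the dots in column x (dots are (x,y) for lo \<le> y < lo + d_x;
  for x = k this is 0 \<le> y < d_k).\<close>
definition dot_lo :: "(nat \<Rightarrow> nat) \<Rightarrow> nat \<Rightarrow> (nat \<Rightarrow> nat) \<Rightarrow> nat \<Rightarrow> int" where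
  "dot_lo d k e x =
     (if x < k then int (d k) - int (d x) - int (\<Sum>i\<in>{x..k-1}. e i)
      else if x = k then 0
      else int (\<Sum>i\<in>{k+1..x}. e i))"

definition dots :: "(nat \<Rightarrow> nat) \<Rightarrow> nat \<Rightarrow> (nat \<Rightarrow> nat) \<Rightarrow> nat \<Rightarrow> int set" where
  "dots d k e x = {y. dot_lo d k e x \<le> y \<and> y < dot_lo d k e x + int (d x)}"

text \<open>Matrix of V(e): basis of column x ordered by increasing y (r-th basis vector = dot
  (x, lo_x + r)); the map x-1 -> x sends dot (x-1,y) to (x,y) if that dot exists, else to 0.\<close>
definition Vmat :: "(nat \<Rightarrow> nat) \<Rightarrow> nat \<Rightarrow> (nat \<Rightarrow> nat) \<Rightarrow> nat \<Rightarrow> complex mat" where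
  "Vmat d k e x = mat (d x) (d (x - 1))
     (\<lambda>(r, c). if dot_lo d k e x + int r = dot_lo d k e (x - 1) + int c then 1 else 0)"

end

theory Submission
  imports Defs
begin

lemma Vpath:
  assumes "i \<le> n"
  shows "comp_path d (Vmat d k e) i \<in> carrier_mat (d i) (d 0) \<and>
    (\<forall>r c. r < d i \<longrightarrow> c < d 0 \<longrightarrow> comp_path d (Vmat d k e) i $$ (r, c) \<noteq> 0 \<longrightarrow>
       dot_lo d k e i + int r = dot_lo d k e 0 + int c)"
  using assms
proof (induction i)
  case 0
  then show ?case by auto
next
  case (Suc i)
  then have IH1: "comp_path d (Vmat d k e) i \<in> carrier_mat (d i) (d 0)"
    and IH2: "\<And>r c. r < d i \<Longrightarrow> c < d 0 \<Longrightarrow> comp_path d (Vmat d k e) i $$ (r, c) \<noteq> 0 \<Longrightarrow>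
       dot_lo d k e i + int r = dot_lo d k e 0 + int c" by auto
  have V: "Vmat d k e (Suc i) \<in> carrier_mat (d (Suc i)) (d i)" by (simp add: Vmat_def)
  have "comp_path d (Vmat d k e) (Suc i) \<in> carrier_mat (d (Suc i)) (d 0)"
    using IH1 V by simp
  moreover have "dot_lo d k e (Suc i) + int r = dot_lo d k e 0 + int c"
    if r: "r < d (Suc i)" and c: "c < d 0" and nz: "comp_path d (Vmat d k e) (Suc i) $$ (r, c) \<noteq> 0" for r c
  proof -
    have "comp_path d (Vmat d k e) (Suc i) $$ (r, c) =
        (\<Sum>j<d i. Vmat d k e (Suc i) $$ (r, j) * comp_path d (Vmat d k e) i $$ (j, c))"
      using IH1 V r c by (simp add: index_mult_mat scalar_prod_def lessThan_atLeast0)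
    with nz obtain j where j: "j < d i" and
      nz2: "Vmat d k e (Suc i) $$ (r, j) * comp_path d (Vmat d k e) i $$ (j, c) \<noteq> 0"
      using sum.neutral[of "{..<d i}"] by (smt (verit) lessThan_iff)
    from nz2 have a: "Vmat d k e (Suc i) $$ (r, j) \<noteq> 0" and b: "comp_path d (Vmat d k e) i $$ (j, c) \<noteq> 0"
      by auto
    from a r j have "dot_lo d k e (Suc i) + int r = dot_lo d k e i + int j"
      by (simp add: Vmat_def split: if_splits)
    also have "\<dots> = dot_lo d k e 0 + int c" using IH2[OF j c b] .
    finally show ?thesis .
  qed
  ultimately show ?case by blast
qed

lemma Bpath:
  assumes g: "\<forall>i\<in>{0..n}. g i \<in> carrier_mat (d i) (d i)"
    and h: "\<forall>i\<in>{0..n}. h i \<in> carrier_mat (d i) (d i) \<and> inverts_mat (g i) (h i) \<and> inverts_mat (h i) (g i)"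
    and B: "\<forall>i\<in>{1..n}. B i = g i * A i * h (i - 1)"
    and A: "\<forall>i\<in>{1..n}. A i \<in> carrier_mat (d i) (d (i - 1))"
    and CA: "\<forall>i\<le>n. comp_path d A i \<in> carrier_mat (d i) (d 0)"
    and "i \<le> n"
  shows "comp_path d B i = g i * comp_path d A i * h 0"
  using \<open>i \<le> n\<close>
proof (induction i)
  case 0
  have g0: "g 0 \<in> carrier_mat (d 0) (d 0)" "inverts_mat (g 0) (h 0)" using g h by auto
  then have "g 0 * h 0 = 1\<^sub>m (d 0)" unfolding inverts_mat_def by auto
  moreover have "g 0 * 1\<^sub>m (d 0) = g 0" using g0(1) by simp
  ultimately show ?case by simp
next
  case (Suc i)
  have gi: "g i \<in> carrier_mat (d i) (d i)" and hi: "h i \<in> carrier_mat (d i) (d i)"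
    and gS: "g (Suc i) \<in> carrier_mat (d (Suc i)) (d (Suc i))"
    and h0: "h 0 \<in> carrier_mat (d 0) (d 0)"
    using g h Suc.prems by auto
  have "inverts_mat (h i) (g i)" using h Suc.prems by auto
  then have hg: "h i * g i = 1\<^sub>m (d i)" using hi unfolding inverts_mat_def by auto
  have AS: "A (Suc i) \<in> carrier_mat (d (Suc i)) (d (Suc i - 1))" proof -
    have "Suc i \<in> {1..n}" using Suc.prems by simp
    then show ?thesis using A by blast
  qed
  then have AS: "A (Suc i) \<in> carrier_mat (d (Suc i)) (d i)" by simp
  have Ci: "comp_path d A i \<in> carrier_mat (d i) (d 0)" using CA Suc.prems by auto
  have BS: "B (Suc i) = g (Suc i) * A (Suc i) * h i" using B Suc.prems by auto
  have "comp_path d B (Suc i) = (g (Suc i) * A (Suc i) * h i) * (g i * comp_path d A i * h 0)"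
    using Suc BS by simp
  also have "\<dots> = (g (Suc i) * A (Suc i)) * (h i * (g i * (comp_path d A i * h 0)))"
  proof -
    have "(g (Suc i) * A (Suc i) * h i) * (g i * comp_path d A i * h 0) = (g (Suc i) * A (Suc i) * h i) * (g i * (comp_path d A i * h 0))"
      using gi h0 Ci by (simp add: assoc_mult_mat[of _ "d i" "d i"])
    also have "\<dots> = (g (Suc i) * A (Suc i)) * (h i * (g i * (comp_path d A i * h 0)))"
      by (rule assoc_mult_mat[of _ "d (Suc i)" "d i" _ "d i" _ "d 0"]) (use gi hi gS h0 AS Ci in auto)
    finally show ?thesis .
  qed
  also have "h i * (g i * (comp_path d A i * h 0)) = (h i * g i) * (comp_path d A i * h 0)"
    by (rule assoc_mult_mat[symmetric, of _ "d i" "d i" _ "d i" _ "d 0"]) (use gi hi h0 Ci in auto)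
  also have "\<dots> = comp_path d A i * h 0" using hg h0 Ci by simp
  also have "(g (Suc i) * A (Suc i)) * (comp_path d A i * h 0) = g (Suc i) * (A (Suc i) * comp_path d A i) * h 0"
  proof -
    have "(g (Suc i) * A (Suc i)) * (comp_path d A i * h 0) = g (Suc i) * (A (Suc i) * (comp_path d A i * h 0))"
      by (rule assoc_mult_mat[of _ "d (Suc i)" "d (Suc i)" _ "d i" _ "d 0"]) (use gS AS Ci h0 in auto)
    also have "A (Suc i) * (comp_path d A i * h 0) = (A (Suc i) * comp_path d A i) * h 0"
      by (rule assoc_mult_mat[symmetric, of _ "d (Suc i)" "d i" _ "d 0" _ "d 0"]) (use AS Ci h0 in auto)
    also have "g (Suc i) * ((A (Suc i) * comp_path d A i) * h 0) = g (Suc i) * (A (Suc i) * comp_path d A i) * h 0"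
      by (rule assoc_mult_mat[symmetric, of _ "d (Suc i)" "d (Suc i)" _ "d 0" _ "d 0"]) (use gS AS Ci h0 in auto)
    finally show ?thesis .
  qed
  finally show ?case by simp
qed

theorem proposition4p7:
  fixes n k :: nat and d e :: "nat \<Rightarrow> nat"
  assumes "k \<le> n"
    and "d k = Min (d ` {0..n})"
    and "rising_vector n d k e"
  shows "orbit n d (Vmat d k e) \<subseteq> Sigma_d n d"
proof
  fix B assume "B \<in> orbit n d (Vmat d k e)"
  then obtain g h where gl: "GL_elem n d g" and
    h: "\<forall>i\<in>{0..n}. h i \<in> carrier_mat (d i) (d i) \<and> inverts_mat (g i) (h i) \<and> inverts_mat (h i) (g i)"
    and B: "\<forall>i\<in>{1..n}. B i = g i * Vmat d k e i * h (i - 1)"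
    unfolding orbit_def by blast
  have g: "\<forall>i\<in>{0..n}. g i \<in> carrier_mat (d i) (d i)" using gl unfolding GL_elem_def by auto
  have A: "\<forall>i\<in>{1..n}. Vmat d k e i \<in> carrier_mat (d i) (d (i - 1))" by (simp add: Vmat_def)
  have CA: "\<forall>i\<le>n. comp_path d (Vmat d k e) i \<in> carrier_mat (d i) (d 0)" using Vpath by blast
  have Rep: "B \<in> Rep n d"
    unfolding Rep_def using B g h A by fastforce
  define SL where "SL = (\<Sum>i\<in>{0..<k}. e i)"
  define SR where "SR = (\<Sum>i\<in>{k+1..n}. e i)"
  have split: "{0..n} - {k} = {0..<k} \<union> {k+1..n}" using assms(1) by auto
  have "sum e ({0..<k} \<union> {k+1..n}) = SL + SR" unfolding SL_def SR_def
    by (subst sum.union_disjoint) auto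
  then have "SL + SR = d k" using assms(3) unfolding rising_vector_def split by simp
  have lo0: "dot_lo d k e 0 + int (d 0) = int (d k) - int SL"
  proof (cases "k = 0")
    case True then show ?thesis by (simp add: dot_lo_def SL_def)
  next
    case False
    then have "{0..k-1} = {0..<k}" by auto
    then show ?thesis using False by (simp add: dot_lo_def SL_def)
  qed
  have lon: "dot_lo d k e n = int SR"
  proof (cases "k = n")
    case True then show ?thesis by (simp add: dot_lo_def SR_def)
  next
    case False
    then show ?thesis using assms(1) by (simp add: dot_lo_def SR_def)
  qed
  have key: "dot_lo d k e 0 + int (d 0) = dot_lo d k e n"
    using lo0 lon \<open>SL + SR = d k\<close> by linarith
  have Cz: "comp_path d (Vmat d k e) n = 0\<^sub>m (d n) (d 0)"
  proof (rule eq_matI)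
    have VP: "comp_path d (Vmat d k e) n \<in> carrier_mat (d n) (d 0) \<and>
      (\<forall>r c. r < d n \<longrightarrow> c < d 0 \<longrightarrow> comp_path d (Vmat d k e) n $$ (r, c) \<noteq> 0 \<longrightarrow>
       dot_lo d k e n + int r = dot_lo d k e 0 + int c)" using Vpath by blast
    fix r c assume r: "r < dim_row (0\<^sub>m (d n) (d 0))" and c: "c < dim_col (0\<^sub>m (d n) (d 0))"
    show "comp_path d (Vmat d k e) n $$ (r, c) = 0\<^sub>m (d n) (d 0) $$ (r, c)"
    proof (rule ccontr)
      assume "comp_path d (Vmat d k e) n $$ (r, c) \<noteq> 0\<^sub>m (d n) (d 0) $$ (r, c)"
      with r c have "comp_path d (Vmat d k e) n $$ (r, c) \<noteq> 0" by simp
      with VP r c have "dot_lo d k e n + int r = dot_lo d k e 0 + int c" by simp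
      with key c show False by simp
    qed
  qed (use CA in auto)
  have "comp_path d B n = g n * comp_path d (Vmat d k e) n * h 0"
    using Bpath[OF g h B A CA] by simp
  also have "\<dots> = 0\<^sub>m (d n) (d 0)"
  proof -
    have "g n \<in> carrier_mat (d n) (d n)" "h 0 \<in> carrier_mat (d 0) (d 0)" using g h by auto
    then show ?thesis using Cz by simp
  qed
  finally show "B \<in> Sigma_d n d" using Rep unfolding Sigma_d_def by auto
qed

end
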